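(* Let $a\le b<\infty$ and $\beta,\eta,\nu>0$ with $\eta^2<2\beta\nu$, and set $\mu=\eta/\nu$, $\sigma=2\beta/\nu$. Consider the problem $$\sup_f\ \int_a^\infty \mathbb{I}(x>b)f(x)\,dx\quad\text{s.t.}\quad \int_a^\infty f(x)dx=\beta,\ \ f(a)=f(a+)=\eta,\ \ f'_+(a)\ge-\nu,\ \ f\text{ convex on }[a,\infty),\ \ f\ge0\text{ on }[a,\infty),$$ over functions $f:[a,\infty)\to\mathbb{R}$, and denote its optimal value by $z^*=z^*(a,b)$. Then $$z^*=\begin{cases}\frac{\nu}{2}(\sigma-\mu^2) & \text{if }\mu\le b-a,\\ \frac{\nu}{2}\big[\sigma-2(b-a)\mu+(b-a)^2\big]&\text{if }\mu>b-a.\end{cases}$$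
   Context: $f(a+)$ denotes the right limit of $f$ at $a$ and $f'_+$ the right derivative. *)

theory Defs
  imports "HOL-Analysis.Analysis"
begin

definition feasible :: "real \<Rightarrow> real \<Rightarrow> real \<Rightarrow> real \<Rightarrow> (real \<Rightarrow> real) \<Rightarrow> bool" where
  "feasible a \<beta> \<eta> \<nu> f \<longleftrightarrow>
     (f has_integral \<beta>) {a..} \<and>
     f a = \<eta> \<and> (f \<longlongrightarrow> \<eta>) (at_right a) \<and>
     (\<exists>D. (f has_real_derivative D) (at a within {a..}) \<and> D \<ge> - \<nu>) \<and>
     convex_on {a..} f \<and>
     (\<forall>x\<ge>a. f x \<ge> 0)"

definition objective :: "real \<Rightarrow> real \<Rightarrow> (real \<Rightarrow> real) \<Rightarrow> real" where
  "objective a b f = integral {a..} (\<lambda>x. if x > b then f x else 0)"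

end

theory Submission
  imports Defs
begin


lemma affine_integral:
  fixes u w c d :: real
  assumes "u \<le> w"
  shows "((\<lambda>x. c + d * (x - u)) has_integral (c * (w - u) + d * (w - u)^2 / 2)) {u..w}"
proof -
  have "((\<lambda>x. c + d * (x - u)) has_integral
        ((\<lambda>x. c * (x - u) + d * (x - u)^2 / 2) w - (\<lambda>x. c * (x - u) + d * (x - u)^2 / 2) u)) {u..w}"
    apply (rule fundamental_theorem_of_calculus[OF assms])
    apply (auto intro!: derivative_eq_intros simp: has_real_derivative_iff_has_vector_derivative[symmetric])
    done
  then show ?thesis by simp
qed

lemma tangent_bound:
  fixes f :: "real \<Rightarrow> real"
  assumes cv: "convex_on {a..} f" and D: "(f has_real_derivative D) (at a within {a..})"
    and y: "y \<ge> a"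
  shows "f y \<ge> f a + D * (y - a)"
proof (cases "y = a")
  case True then show ?thesis by simp
next
  case False
  with y have ya: "a < y" by simp
  have lim: "((\<lambda>t. (f t - f a) / (t - a)) \<longlongrightarrow> D) (at a within {a..})"
    using D by (simp add: has_field_derivative_iff)
  have ev: "eventually (\<lambda>t. (f t - f a) / (t - a) \<le> (f y - f a) / (y - a)) (at a within {a..})"
  proof -
    have "eventually (\<lambda>t. t \<in> {a..} \<and> t \<noteq> a \<and> dist t a < y - a) (at a within {a..})"
      using ya by (auto simp: eventually_at intro!: exI[of _ "y - a"])
    then show ?thesis
    proof (rule eventually_mono)
      fix t assume t: "t \<in> {a..} \<and> t \<noteq> a \<and> dist t a < y - a"
      then have "a < t" "t < y" by (auto simp: dist_real_def)
      from convex_on_slope_le(1)[OF cv _ _ this, of ] y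
      have "(f a - f t) / (a - t) \<le> (f a - f y) / (a - y)" by auto
      then show "(f t - f a) / (t - a) \<le> (f y - f a) / (y - a)"
        by (smt (verit, best) minus_divide_divide)
    qed
  qed
  have nb: "at a within {a..} \<noteq> bot"
    by (simp add: at_within_Ici_at_right)
  have "D \<le> (f y - f a) / (y - a)"
    by (rule tendsto_upperbound[OF lim ev nb])
  then show ?thesis using ya by (simp add: field_simps)
qed

lemma feasible_split:
  assumes "feasible a \<beta> \<eta> \<nu> f" "a \<le> b"
  shows "f integrable_on {a..b}" "objective a b f = \<beta> - integral {a..b} f"
proof -
  have hi: "(f has_integral \<beta>) {a..}" and nn: "\<And>x. x \<ge> a \<Longrightarrow> f x \<ge> 0"
    using assms by (auto simp: feasible_def)
  have "f absolutely_integrable_on {a..}"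
    by (rule nonnegative_absolutely_integrable_1) (use hi nn in auto)
  then have "set_integrable lebesgue {a..} f"
    by (simp add: absolutely_integrable_on_def)
  then have "set_integrable lebesgue {a..b} f"
    by (rule set_integrable_subset) auto
  then show fi: "f integrable_on {a..b}"
    using absolutely_integrable_on_def set_lebesgue_integral_eq_integral(1) by blast
  have h1: "((\<lambda>x. if x \<in> {a..b} then f x else 0) has_integral integral {a..b} f) {a..}"
    using fi by (subst has_integral_restrict) auto
  have h2: "((\<lambda>x. f x - (if x \<in> {a..b} then f x else 0)) has_integral (\<beta> - integral {a..b} f)) {a..}"
    by (rule has_integral_diff[OF hi h1])
  have h3: "((\<lambda>x. if x > b then f x else 0) has_integral (\<beta> - integral {a..b} f)) {a..}"
    by (rule has_integral_cong[THEN iffD1, OF _ h2]) auto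
  then show "objective a b f = \<beta> - integral {a..b} f"
    unfolding objective_def by (rule integral_unique)
qed



lemma upper_bound:
  assumes fe: "feasible a \<beta> \<eta> \<nu> f" and ab: "a \<le> b" and t: "0 \<le> t" "t \<le> b - a"
  shows "objective a b f \<le> \<beta> - (\<eta> * t - \<nu> * t^2 / 2)"
proof -
  obtain D where D: "(f has_real_derivative D) (at a within {a..})" "D \<ge> - \<nu>"
    and cv: "convex_on {a..} f" and fa: "f a = \<eta>" and nn: "\<And>x. x \<ge> a \<Longrightarrow> f x \<ge> 0"
    using fe by (auto simp: feasible_def)
  have fi: "f integrable_on {a..b}" and ob: "objective a b f = \<beta> - integral {a..b} f"
    using feasible_split[OF fe ab] by auto
  define p where "p = a + t"
  have ap: "a \<le> p" "p \<le> b" using t by (auto simp: p_def)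
  have fi1: "f integrable_on {a..p}" and fi2: "f integrable_on {p..b}"
    using fi ap by (auto intro: integrable_on_subinterval)
  have comb: "integral {a..p} f + integral {p..b} f = integral {a..b} f"
    using Henstock_Kurzweil_Integration.integral_combine[OF ap fi] .
  have "integral {p..b} f \<ge> 0"
    using fi2 ap by (intro integral_nonneg) (auto intro!: nn)
  moreover have "integral {a..p} f \<ge> \<eta> * t - \<nu> * t^2 / 2"
  proof -
    have hA: "((\<lambda>x. \<eta> + (- \<nu>) * (x - a)) has_integral (\<eta> * (p - a) + (-\<nu>) * (p - a)^2 / 2)) {a..p}"
      by (rule affine_integral[OF ap(1)])
    have le: "\<eta> + (- \<nu>) * (x - a) \<le> f x" if "x \<in> {a..p}" for x
    proof -
      have "f x \<ge> f a + D * (x - a)" using tangent_bound[OF cv D(1)] that by auto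
      moreover have "D * (x - a) \<ge> - \<nu> * (x - a)" using D(2) that by (intro mult_right_mono) auto
      ultimately show ?thesis using fa by simp
    qed
    have "\<eta> * (p - a) + (-\<nu>) * (p - a)^2 / 2 \<le> integral {a..p} f"
      by (rule has_integral_le[OF hA integrable_integral[OF fi1] le])
    then show ?thesis by (simp add: p_def)
  qed
  ultimately show ?thesis using comb ob by linarith
qed



lemma convex_on_max2:
  assumes "convex_on S f" "convex_on S g"
  shows "convex_on S (\<lambda>x. max (f x) (g x))"
  using assms unfolding convex_on_def
  by (smt (verit) mult_left_mono)

lemma convex_on_affine_real:
  fixes c d e :: real
  shows "convex_on {a..} (\<lambda>x. c + d * (x - e))"
  unfolding convex_on_def
proof (intro conjI allI impI ballI)
  show "convex {a::real..}" by simp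
next
  fix x y u v :: real assume "0 \<le> u" "0 \<le> v" "u + v = 1"
  then have vv: "v = 1 - u" by simp
  show "c + d * (u *\<^sub>R x + v *\<^sub>R y - e) \<le> u * (c + d * (x - e)) + v * (c + d * (y - e))"
    unfolding vv by (simp add: algebra_simps)
qed



lemma construct:
  fixes a b \<beta> \<eta> \<nu> t :: real
  assumes ab: "a \<le> b" and bp: "\<beta> > 0" and ep: "\<eta> > 0" and np: "\<nu> > 0"
    and h: "\<eta>\<^sup>2 < 2 * \<beta> * \<nu>" and t: "0 \<le> t" "t \<le> b - a" "\<nu> * t < \<eta>"
  shows "\<exists>f. feasible a \<beta> \<eta> \<nu> f \<and>
     objective a b f \<ge> \<beta> - (\<eta> * t - \<nu> * t^2 / 2) - (\<eta> - \<nu> * t) * (b - a - t)"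
proof -
  define v where "v = \<eta> - \<nu> * t"
  define A1 where "A1 = \<eta> * t - \<nu> * t^2 / 2"
  define R where "R = \<beta> - A1"
  define T where "T = 2 * R / v"
  define s where "s = v / T"
  define p where "p = a + t"
  define q where "q = p + T"
  define l1 where "l1 = (\<lambda>x. \<eta> + (- \<nu>) * (x - a))"
  define l2 where "l2 = (\<lambda>x. v + (- s) * (x - p))"
  define f where "f = (\<lambda>x. max (l1 x) (max (l2 x) 0))"
  have vp: "v > 0" using t by (simp add: v_def)
  have key: "2 * \<nu> * R = 2 * \<nu> * \<beta> + v^2 - \<eta>^2"
    by (simp add: R_def A1_def v_def power2_eq_square algebra_simps)
  have "2 * \<nu> * R > v^2" using key h by (simp add: algebra_simps)
  moreover have "v^2 > 0" using vp by simp
  ultimately have Rp: "R > 0" using np by (smt (verit) mult_pos_pos zero_less_mult_pos)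
  have Tp: "T > 0" using Rp vp by (simp add: T_def)
  have sv: "s = v^2 / (2 * R)" using vp Rp by (simp add: s_def T_def power2_eq_square)
  have sp: "s > 0" using vp Tp by (simp add: s_def)
  have sn: "s < \<nu>" using \<open>2 * \<nu> * R > v^2\<close> Rp by (simp add: sv divide_less_eq algebra_simps)
  have sT: "s * T = v" using Tp by (simp add: s_def)
  have vT: "v * T = 2 * R" using vp by (simp add: T_def)
  have l1p: "l1 x = v + \<nu> * (p - x)" for x by (simp add: l1_def v_def p_def algebra_simps)
  have l2p: "l2 x = v + s * (p - x)" for x by (simp add: l2_def algebra_simps)
  have l2q: "l2 x = s * (q - x)" for x using sT by (simp add: l2p q_def algebra_simps)
  have P1: "f x = l1 x" if "x \<le> p" for x
  proof -
    have "(\<nu> - s) * (p - x) \<ge> 0" using sn that by simp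
    then have "l1 x \<ge> l2 x" by (simp add: l1p l2p algebra_simps)
    moreover have "l1 x \<ge> 0" using that vp np by (simp add: l1p)
    ultimately show ?thesis by (simp add: f_def)
  qed
  have P2: "f x = l2 x" if "p \<le> x" "x \<le> q" for x
  proof -
    have "(\<nu> - s) * (x - p) \<ge> 0" using sn that by simp
    then have "l2 x \<ge> l1 x" by (simp add: l1p l2p algebra_simps)
    moreover have "l2 x \<ge> 0" using that sp by (simp add: l2q)
    ultimately show ?thesis by (simp add: f_def)
  qed
  have P3: "f x = 0" if "q \<le> x" for x
  proof -
    have "l2 x \<le> 0" using that sp by (simp add: l2q mult_nonneg_nonpos)
    moreover have "(\<nu> - s) * (x - p) \<ge> 0" using sn that Tp by (simp add: q_def)
    then have "l2 x \<ge> l1 x" by (simp add: l1p l2p algebra_simps)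
    ultimately show ?thesis by (simp add: f_def)
  qed
  have P4: "f x \<le> v" if "p \<le> x" for x
  proof -
    have "l1 x \<le> v" using that np by (simp add: l1p mult_nonneg_nonpos)
    moreover have "l2 x \<le> v" using that sp by (simp add: l2p mult_nonneg_nonpos)
    ultimately show ?thesis using vp by (simp add: f_def)
  qed
  have ap: "a \<le> p" using t by (simp add: p_def)
  have pq: "p \<le> q" using Tp by (simp add: q_def)
  have I1: "(f has_integral A1) {a..p}"
  proof -
    have "(l1 has_integral (\<eta> * (p - a) + (-\<nu>) * (p - a)^2 / 2)) {a..p}"
      unfolding l1_def by (rule affine_integral[OF ap])
    then have "(l1 has_integral A1) {a..p}" by (simp add: A1_def p_def)
    then show ?thesis by (rule has_integral_cong[THEN iffD1, rotated]) (simp add: P1)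
  qed
  have I2: "(f has_integral R) {p..q}"
  proof -
    have "(l2 has_integral (v * (q - p) + (-s) * (q - p)^2 / 2)) {p..q}"
      unfolding l2_def by (rule affine_integral[OF pq])
    moreover have "v * (q - p) + (-s) * (q - p)^2 / 2 = R"
      using vT sT by (simp add: q_def power2_eq_square algebra_simps)
    ultimately have "(l2 has_integral R) {p..q}" by simp
    then show ?thesis by (rule has_integral_cong[THEN iffD1, rotated]) (simp add: P2)
  qed
  have I3: "(f has_integral \<beta>) {a..q}"
    using has_integral_combine[OF ap pq I1 I2] by (simp add: R_def)
  have I4: "(f has_integral \<beta>) {a..}"
  proof -
    have "((\<lambda>x. if x \<in> {a..q} then f x else 0) has_integral \<beta>) {a..}"
      using I3 by (subst has_integral_restrict) auto
    then show ?thesis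
      by (rule has_integral_cong[THEN iffD1, rotated]) (auto simp: P3)
  qed
  have fa: "f a = \<eta>" using P1[OF ap] by (simp add: l1_def)
  have cont: "isCont f x" for x
    unfolding f_def l1_def l2_def by (intro continuous_intros)
  have lim: "(f \<longlongrightarrow> \<eta>) (at_right a)"
    using cont[of a] fa by (metis continuous_at_split continuous_within)
  have der: "\<exists>D. (f has_real_derivative D) (at a within {a..}) \<and> D \<ge> - \<nu>"
  proof (cases "t = 0")
    case False
    then have tp: "t > 0" using t by simp
    have "(l1 has_real_derivative (- \<nu>)) (at a within {a..})"
      unfolding l1_def by (auto intro!: derivative_eq_intros)
    then have "(f has_real_derivative (- \<nu>)) (at a within {a..})"
      by (rule has_field_derivative_transform_within[OF _ tp])
         (auto simp: dist_real_def p_def intro!: P1[symmetric])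
    then show ?thesis by auto
  next
    case True
    then have pa: "p = a" by (simp add: p_def)
    have "(l2 has_real_derivative (- s)) (at a within {a..})"
      unfolding l2_def by (auto intro!: derivative_eq_intros)
    then have "(f has_real_derivative (- s)) (at a within {a..})"
      by (rule has_field_derivative_transform_within[OF _ Tp])
         (auto simp: dist_real_def pa q_def intro!: P2[symmetric])
    then show ?thesis using sn by auto
  qed
  have cvx: "convex_on {a..} f"
    unfolding f_def l1_def l2_def
    by (intro convex_on_max2 convex_on_affine_real) (simp add: convex_on_const)
  have nn: "\<forall>x\<ge>a. f x \<ge> 0" by (simp add: f_def le_max_iff_disj)
  have fe: "feasible a \<beta> \<eta> \<nu> f"
    unfolding feasible_def using I4 fa lim der cvx nn by blast
  have pb: "p \<le> b" using t by (simp add: p_def)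
  have fi: "f integrable_on {a..b}" using feasible_split(1)[OF fe ab] .
  have comb: "integral {a..p} f + integral {p..b} f = integral {a..b} f"
    using Henstock_Kurzweil_Integration.integral_combine[OF ap pb fi] .
  have "integral {p..b} f \<le> v * (b - p) + 0 * (b - p)^2 / 2"
  proof (rule has_integral_le[OF integrable_integral])
    show "f integrable_on {p..b}" using fi ap by (auto intro: integrable_on_subinterval)
    show "((\<lambda>x. v + 0 * (x - p)) has_integral v * (b - p) + 0 * (b - p)^2 / 2) {p..b}"
      by (rule affine_integral[OF pb])
    show "f x \<le> v + 0 * (x - p)" if "x \<in> {p..b}" for x using P4 that by simp
  qed
  moreover have "integral {a..p} f = A1" using I1 by (rule integral_unique)
  ultimately have "integral {a..b} f \<le> A1 + v * (b - p)" using comb by simp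
  then have "objective a b f \<ge> \<beta> - A1 - v * (b - a - t)"
    using feasible_split(2)[OF fe ab] by (simp add: p_def algebra_simps)
  then show ?thesis using fe by (auto simp: A1_def v_def)
qed



theorem theorem3:
  fixes a b \<beta> \<eta> \<nu> \<mu> \<sigma> :: real
  assumes "a \<le> b" and "\<beta> > 0" and "\<eta> > 0" and "\<nu> > 0"
    and "\<eta>\<^sup>2 < 2 * \<beta> * \<nu>"
    and "\<mu> = \<eta> / \<nu>" and "\<sigma> = 2 * \<beta> / \<nu>"
  shows "(SUP f \<in> {f. feasible a \<beta> \<eta> \<nu> f}. ereal (objective a b f)) =
         ereal (if \<mu> \<le> b - a then \<nu> / 2 * (\<sigma> - \<mu>\<^sup>2)
                else \<nu> / 2 * (\<sigma> - 2 * (b - a) * \<mu> + (b - a)\<^sup>2))"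
proof -
  note ab = assms(1) and bp = assms(2) and ep = assms(3) and np = assms(4) and h = assms(5)
  define L where "L = b - a"
  define V where "V = (if \<mu> \<le> b - a then \<nu> / 2 * (\<sigma> - \<mu>\<^sup>2)
                else \<nu> / 2 * (\<sigma> - 2 * (b - a) * \<mu> + (b - a)\<^sup>2))"
  have eta: "\<eta> = \<mu> * \<nu>" using assms(6) np by simp
  have bet: "\<beta> = \<sigma> * \<nu> / 2" using assms(7) np by simp
  have Lnn: "L \<ge> 0" using ab by (simp add: L_def)
  have mup: "\<mu> > 0" using eta ep np by (simp add: zero_less_mult_iff)
  have up: "objective a b f \<le> V" if "feasible a \<beta> \<eta> \<nu> f" for f
  proof -
    define t where "t = min \<mu> L"
    have "objective a b f \<le> \<beta> - (\<eta> * t - \<nu> * t^2 / 2)"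
      by (rule upper_bound[OF that ab]) (use mup Lnn in \<open>auto simp: t_def L_def\<close>)
    moreover have "\<beta> - (\<eta> * t - \<nu> * t^2 / 2) = V"
      unfolding V_def t_def L_def eta bet min_def by (auto simp: power2_eq_square field_simps)
    ultimately show ?thesis by simp
  qed
  have lo: "\<exists>f. feasible a \<beta> \<eta> \<nu> f \<and> objective a b f \<ge> V - e" if ep': "e > 0" for e
  proof (cases "\<mu> \<le> L")
    case True
    then have Lp: "L > 0" using mup by simp
    define \<delta> where "\<delta> = min (\<mu> / 2) (e / (\<nu> * L))"
    have dp: "\<delta> > 0" using mup ep' np Lp by (simp add: \<delta>_def)
    have dm: "\<delta> \<le> \<mu>" using mup by (simp add: \<delta>_def)
    have de: "\<nu> * \<delta> * L \<le> e"
    proof -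
      have "\<delta> \<le> e / (\<nu> * L)" by (simp add: \<delta>_def)
      then show ?thesis using np Lp by (simp add: le_divide_eq mult.commute mult.left_commute)
    qed
    define t where "t = \<mu> - \<delta>"
    obtain f where fe: "feasible a \<beta> \<eta> \<nu> f"
      and ob: "objective a b f \<ge> \<beta> - (\<eta> * t - \<nu> * t^2 / 2) - (\<eta> - \<nu> * t) * (b - a - t)"
      using construct[OF ab bp ep np h, of t] dm dp True np
      by (auto simp: t_def L_def eta algebra_simps)
    have "\<beta> - (\<eta> * t - \<nu> * t^2 / 2) - (\<eta> - \<nu> * t) * (b - a - t)
          = V - \<nu> * \<delta> * (L - \<mu>) - \<nu> * \<delta>^2 / 2"
      using True by (simp add: V_def L_def t_def eta bet power2_eq_square field_simps)
    also have "\<dots> \<ge> V - \<nu> * \<delta> * L"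
    proof -
      have "\<nu> * \<delta>^2 / 2 \<le> \<nu> * \<delta> * \<mu>"
        using dm dp np by (simp add: power2_eq_square)
      then show ?thesis by (simp add: algebra_simps)
    qed
    finally show ?thesis using fe ob de by (intro exI[of _ f]) auto
  next
    case False
    obtain f where fe: "feasible a \<beta> \<eta> \<nu> f"
      and ob: "objective a b f \<ge> \<beta> - (\<eta> * L - \<nu> * L^2 / 2) - (\<eta> - \<nu> * L) * (b - a - L)"
      using construct[OF ab bp ep np h, of L] False np Lnn
      by (auto simp: L_def eta mult.commute)
    have "\<beta> - (\<eta> * L - \<nu> * L^2 / 2) - (\<eta> - \<nu> * L) * (b - a - L) = V"
      using False by (simp add: V_def L_def eta bet power2_eq_square field_simps)
    then show ?thesis using fe ob ep' by (intro exI[of _ f]) auto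
  qed
  have "(SUP f \<in> {f. feasible a \<beta> \<eta> \<nu> f}. ereal (objective a b f)) = ereal V"
  proof (rule antisym)
    show "(SUP f \<in> {f. feasible a \<beta> \<eta> \<nu> f}. ereal (objective a b f)) \<le> ereal V"
      by (rule SUP_least) (use up in auto)
  next
    show "ereal V \<le> (SUP f \<in> {f. feasible a \<beta> \<eta> \<nu> f}. ereal (objective a b f))"
    proof (rule ereal_le_epsilon2)
      fix e :: real assume "0 < e"
      then obtain f where fe: "feasible a \<beta> \<eta> \<nu> f" and ob: "objective a b f \<ge> V - e"
        using lo by blast
      have "ereal V \<le> ereal (objective a b f) + ereal e" using ob by simp
      also have "\<dots> \<le> (SUP f \<in> {f. feasible a \<beta> \<eta> \<nu> f}. ereal (objective a b f)) + ereal e"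
        using fe by (intro add_right_mono SUP_upper) auto
      finally show "ereal V \<le> (SUP f \<in> {f. feasible a \<beta> \<eta> \<nu> f}. ereal (objective a b f)) + ereal e" .
    qed
  qed
  then show ?thesis by (simp add: V_def)
qed


end
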